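(* Let $F\subset\mathbb R^d$ be a bounded set with Minkowski dimension $s$ whose Minkowski content $\mathcal M(F)=\lim_{\varepsilon\searrow0}\varepsilon^{s-d}\mathrm{vol}_d(F_\varepsilon)\in(0,\infty)$ exists. Let $\varepsilon_1>\varepsilon_2>\dots>0$, $x_j=-\log\varepsilon_j$, and suppose $y_{j}=\log\mathcal M(F)+s\,x_j+\delta_j$, $j\in\mathbb N$, where the $\delta_j$ have mean zero, finite positive variance, and covariance matrices $Q_n$ of $(\delta_1,\dots,\delta_n)$ satisfying $0<\inf_n\nu_{\min}(Q_n)\le\sup_n\nu_{\max}(Q_n)<\infty$. Suppose $\widetilde S_n^2=\Theta(n^\gamma)$ and $\bar x_n=O(n^{\mu/2})$ for constants $\gamma,\mu\ge0$ with $\alpha:=1-\max\{\gamma,\mu\}-2\max\{0,\mu-\gamma\}>0$. Let $(\hat\beta^{(n)},\hat s^{(n)})$ minimize $\sum_{j=1}^n(y_j-\beta-sx_j)^2$ and $\hat{\mathcal M}^{(n)}=\exp(\hat\beta^{(n)})$. Then for every $\varepsilon>0$, $P(|\hat s^{(n)}-s|>\varepsilon)=O(n^{-\alpha})$ and $P(|\hat{\mathcal M}^{(n)}-\mathcal M(F)|>\varepsilon)=O(n^{-\alpha})$ as $n\to\infty$.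
   Context: $F_\varepsilon=\{x:\operatorname{dist}(x,F)\le\varepsilon\}$; the observations are intended as $y_j=\log(\varepsilon_j^{-d}\mathrm{vol}_d(F_{\varepsilon_j}))$. $\bar x_n=\frac1n\sum_{i\le n}x_i$, $\widetilde S_n^2=\frac1n\sum_{i\le n}(x_i-\bar x_n)^2$; $\nu_{\min},\nu_{\max}$ are extreme eigenvalues; $\Theta$ means bounded above and below by positive constant multiples eventually. *)

theory Defs
  imports "HOL-Probability.Probability" "HOL-Library.Landau_Symbols"
    "Jordan_Normal_Form.Char_Poly"
begin

definition nbhd :: "'a::euclidean_space set \<Rightarrow> real \<Rightarrow> 'a set" where
  "nbhd F e = {x. infdist x F \<le> e}"

definition vol :: "'a::euclidean_space set \<Rightarrow> real" where
  "vol A = measure lebesgue A"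

definition minkowski_dim :: "'a::euclidean_space set \<Rightarrow> real \<Rightarrow> bool" where
  "minkowski_dim F s \<longleftrightarrow>
     ((\<lambda>e. ln (vol (nbhd F e)) / ln e) \<longlongrightarrow> real DIM('a) - s) (at_right 0)"

definition has_minkowski_content :: "'a::euclidean_space set \<Rightarrow> real \<Rightarrow> real \<Rightarrow> bool" where
  "has_minkowski_content F s c \<longleftrightarrow>
     ((\<lambda>e. e powr (s - real DIM('a)) * vol (nbhd F e)) \<longlongrightarrow> c) (at_right 0)"

definition eig_min :: "real Matrix.mat \<Rightarrow> real" where
  "eig_min A = Min {k. eigenvalue A k}"
definition eig_max :: "real Matrix.mat \<Rightarrow> real" where
  "eig_max A = Max {k. eigenvalue A k}"

definition xbar :: "(nat \<Rightarrow> real) \<Rightarrow> nat \<Rightarrow> real" where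
  "xbar x n = (\<Sum>i=1..n. x i) / real n"
definition Stilde2 :: "(nat \<Rightarrow> real) \<Rightarrow> nat \<Rightarrow> real" where
  "Stilde2 x n = (\<Sum>i=1..n. (x i - xbar x n)\<^sup>2) / real n"

definition RSS :: "(nat \<Rightarrow> real) \<Rightarrow> (nat \<Rightarrow> real) \<Rightarrow> nat \<Rightarrow> real \<Rightarrow> real \<Rightarrow> real" where
  "RSS x y n b t = (\<Sum>j=1..n. (y j - b - t * x j)\<^sup>2)"

end

theory Submission
  imports Defs "Jordan_Normal_Form.Spectral_Radius"
begin

definition qf :: "real mat \<Rightarrow> nat \<Rightarrow> (nat \<Rightarrow> real) \<Rightarrow> (nat \<Rightarrow> real) \<Rightarrow> real" where
  "qf A n u w = (\<Sum>i<n. \<Sum>k<n. A $$ (i,k) * u i * w k)"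

lemma quad_zero:
  fixes c q :: real
  assumes "\<And>t. t > 0 \<Longrightarrow> 2 * t * c + t\<^sup>2 * q \<le> 0" and "c \<ge> 0"
  shows "c = 0"
proof (rule ccontr)
  assume "c \<noteq> 0" hence c: "c > 0" using assms(2) by auto
  define t where "t = c / (\<bar>q\<bar> + 1)"
  have t: "t > 0" using c by (simp add: t_def)
  have "t * \<bar>q\<bar> \<le> c" unfolding t_def using c
    by (simp add: field_simps)
  moreover have "t * (- \<bar>q\<bar>) \<le> t * q" by (rule mult_left_mono) (use t in auto)
  ultimately have "t * q \<ge> - c" by simp
  hence "2 * t * c + t\<^sup>2 * q = t * (2 * c + t * q)" by (simp add: power2_eq_square algebra_simps)
  also have "\<dots> > 0" using t c \<open>t * q \<ge> - c\<close> by (intro mult_pos_pos) auto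
  finally show False using assms(1)[OF t] by simp
qed

lemma compact_sphere_fun:
  "compact {v :: nat \<Rightarrow> real. (\<forall>i. v i \<in> (if i < n then {-1..1} else {0})) \<and> (\<Sum>i<n. (v i)\<^sup>2) = 1}"
proof -
  let ?K = "\<lambda>i::nat. if i < n then {-1..1::real} else {0}"
  have "compactin (product_topology (\<lambda>_. euclidean) UNIV) (PiE UNIV ?K)"
    by (subst compactin_PiE) auto
  hence c1: "compact (PiE UNIV ?K)"
    by (simp add: euclidean_product_topology)
  have c2: "closed {v :: nat \<Rightarrow> real. (\<Sum>i<n. (v i)\<^sup>2) = 1}"
    by (intro closed_Collect_eq continuous_intros continuous_on_product_then_coordinatewise continuous_on_id) 
  have "{v :: nat \<Rightarrow> real. (\<forall>i. v i \<in> ?K i) \<and> (\<Sum>i<n. (v i)\<^sup>2) = 1} = PiE UNIV ?K \<inter> {v. (\<Sum>i<n. (v i)\<^sup>2) = 1}"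
    by (auto simp: PiE_def Pi_def)
  thus ?thesis using compact_Int_closed[OF c1 c2] by simp
qed


lemma coord_cont[continuous_intros]: "continuous_on S (\<lambda>x::nat\<Rightarrow>real. x i)"
  by (rule continuous_on_subset[OF continuous_on_product_coordinates]) auto

lemma qf_cont: "continuous_on S (\<lambda>v. qf A n v v)"
  unfolding qf_def by (intro continuous_intros)

lemma qf_scale: "qf A n (\<lambda>i. c * u i) (\<lambda>i. c * u i) = c\<^sup>2 * qf A n u u"
  unfolding qf_def power2_eq_square by (simp add: sum_distrib_left algebra_simps)

lemma qf_restrict: "qf A n (\<lambda>i. if i < n then u i else 0) (\<lambda>i. if i < n then u i else 0) = qf A n u u"
  unfolding qf_def by (intro sum.cong refl) auto

lemma rayleigh_max:
  fixes A :: "real mat"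
  assumes n: "n \<ge> 1"
  shows "\<exists>l. (\<forall>u. qf A n u u \<le> l * (\<Sum>i<n. (u i)\<^sup>2)) \<and>
     (\<exists>v. (\<Sum>i<n. (v i)\<^sup>2) = 1 \<and> qf A n v v = l)"
proof -
  define S where "S = {v :: nat \<Rightarrow> real. (\<forall>i. v i \<in> (if i < n then {-1..1} else {0})) \<and> (\<Sum>i<n. (v i)\<^sup>2) = 1}"
  have cS: "compact S" unfolding S_def by (rule compact_sphere_fun)
  have e1: "(\<Sum>i<n. ((\<lambda>i. if i = 0 then 1 else 0::real) i)\<^sup>2) = (\<Sum>i<n. if i = 0 then 1 else 0)"
    by (intro sum.cong) auto
  have "(\<lambda>i. if i = 0 then 1 else 0::real) \<in> S" using n unfolding S_def
    unfolding mem_Collect_eq e1 by auto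
  hence Sne: "S \<noteq> {}" by auto
  obtain v where vS: "v \<in> S" and vmax: "\<And>u. u \<in> S \<Longrightarrow> qf A n u u \<le> qf A n v v"
    using continuous_attains_sup[OF cS Sne qf_cont, of A n] by blast
  define l where "l = qf A n v v"
  have R: "qf A n u u \<le> l * (\<Sum>i<n. (u i)\<^sup>2)" for u
  proof -
    define N where "N = (\<Sum>i<n. (u i)\<^sup>2)"
    have N0: "N \<ge> 0" unfolding N_def by (intro sum_nonneg) auto
    show ?thesis
    proof (cases "N = 0")
      case True
      hence "\<forall>i\<in>{..<n}. (u i)\<^sup>2 = 0" unfolding N_def
        by (subst sum_nonneg_eq_0_iff[symmetric]) auto
      hence "qf A n u u = 0" unfolding qf_def by auto
      thus ?thesis using True N_def by simp
    next
      case False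
      hence Np: "N > 0" using N0 by simp
      define r where "r = sqrt N"
      have r: "r > 0" "r\<^sup>2 = N" using Np by (auto simp: r_def)
      define w where "w = (\<lambda>i. if i < n then (1 / r) * u i else 0)"
      have sw: "(\<Sum>i<n. (w i)\<^sup>2) = 1"
      proof -
        have "(\<Sum>i<n. (w i)\<^sup>2) = (\<Sum>i<n. (u i)\<^sup>2 / r\<^sup>2)"
          by (intro sum.cong refl) (auto simp: w_def power_divide)
        also have "\<dots> = N / r\<^sup>2" unfolding N_def by (simp add: sum_divide_distrib)
        finally show ?thesis using r Np by simp
      qed
      have "w \<in> S"
      proof -
        have "\<bar>w i\<bar> \<le> 1" if "i < n" for i
        proof -
          have "(w i)\<^sup>2 \<le> (\<Sum>i<n. (w i)\<^sup>2)"
            by (rule member_le_sum) (use that in auto)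
          hence "(w i)\<^sup>2 \<le> 1" using sw by simp
          thus ?thesis by (simp add: abs_square_le_1)
        qed
        moreover have "\<And>i. \<not> i < n \<Longrightarrow> w i = 0" by (simp add: w_def)
        ultimately show ?thesis unfolding S_def using sw by (auto simp: abs_le_iff)
      qed
      hence "qf A n w w \<le> l" using vmax l_def by simp
      moreover have "qf A n w w = (1/r)\<^sup>2 * qf A n u u"
      proof -
        have "qf A n w w = qf A n (\<lambda>i. (1/r) * u i) (\<lambda>i. (1/r) * u i)"
          unfolding w_def using qf_restrict[of A n "\<lambda>i. (1/r) * u i"] by simp
        thus ?thesis using qf_scale[of A n "1/r" u] by simp
      qed
      ultimately have "qf A n u u / N \<le> l" using r by (simp add: power_divide)
      thus ?thesis using Np unfolding N_def by (simp add: divide_le_eq mult.commute)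
    qed
  qed
  moreover have "(\<Sum>i<n. (v i)\<^sup>2) = 1" using vS S_def by simp
  ultimately show ?thesis unfolding l_def by blast
qed


lemma rayleigh_eig:
  fixes A :: "real mat"
  assumes A: "A \<in> carrier_mat n n" and n: "n \<ge> 1"
    and sym: "\<And>i k. i < n \<Longrightarrow> k < n \<Longrightarrow> A $$ (i,k) = A $$ (k,i)"
  shows "qf A n u u \<le> eig_max A * (\<Sum>i<n. (u i)\<^sup>2)"
proof -
  obtain l v where R: "\<And>u. qf A n u u \<le> l * (\<Sum>i<n. (u i)\<^sup>2)"
    and v1: "(\<Sum>i<n. (v i)\<^sup>2) = 1" and vl: "qf A n v v = l"
    using rayleigh_max[OF n, of A] by blast
  define Av where "Av = (\<lambda>i. \<Sum>k<n. A $$ (i,k) * v k)"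
  define r where "r = (\<lambda>i. Av i - l * v i)"
  define X where "X = (\<Sum>i<n. r i * Av i)"
  define Y where "Y = (\<Sum>i<n. v i * r i)"
  define Z where "Z = (\<Sum>i<n. (r i)\<^sup>2)"
  have exp1: "qf A n (\<lambda>i. v i + t * r i) (\<lambda>i. v i + t * r i) = qf A n v v + 2 * t * X + t\<^sup>2 * qf A n r r" for t
  proof -
    have sw: "(\<Sum>i<n. \<Sum>k<n. A$$(i,k) * v i * r k) = (\<Sum>i<n. \<Sum>k<n. A$$(i,k) * r i * v k)"
      by (subst sum.swap) (auto intro!: sum.cong simp: sym)
    have sw2: "(\<Sum>i<n. \<Sum>k<n. A$$(i,k) * r i * v k) = X"
      unfolding X_def Av_def by (simp add: sum_distrib_left algebra_simps)
    have "qf A n (\<lambda>i. v i + t * r i) (\<lambda>i. v i + t * r i) =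
       qf A n v v + t * (\<Sum>i<n. \<Sum>k<n. A$$(i,k) * v i * r k) + t * (\<Sum>i<n. \<Sum>k<n. A$$(i,k) * r i * v k)
        + t\<^sup>2 * qf A n r r"
      unfolding qf_def by (simp add: sum.distrib sum_distrib_left algebra_simps power2_eq_square)
    then show ?thesis using sw sw2 by simp
  qed
  have exp2: "(\<Sum>i<n. (v i + t * r i)\<^sup>2) = 1 + 2 * t * Y + t\<^sup>2 * Z" for t
  proof -
    have "(\<Sum>i<n. (v i + t * r i)\<^sup>2) = (\<Sum>i<n. (v i)\<^sup>2) + 2 * t * Y + t\<^sup>2 * Z"
      unfolding Y_def Z_def by (simp add: power2_eq_square algebra_simps sum.distrib sum_distrib_left)
    thus ?thesis using v1 by simp
  qed
  have cXY: "Z = X - l * Y"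
  proof -
    have "Z = (\<Sum>i<n. r i * Av i - l * (v i * r i))"
      unfolding Z_def by (intro sum.cong refl) (simp add: r_def power2_eq_square algebra_simps)
    thus ?thesis unfolding X_def Y_def by (simp add: sum_subtractf sum_distrib_left)
  qed
  define q where "q = qf A n r r - l * Z"
  have key: "2 * t * Z + t\<^sup>2 * q \<le> 0" if "t > 0" for t
  proof -
    have "qf A n (\<lambda>i. v i + t * r i) (\<lambda>i. v i + t * r i) \<le> l * (\<Sum>i<n. (v i + t * r i)\<^sup>2)"
      by (rule R)
    hence "l + 2 * t * X + t\<^sup>2 * qf A n r r \<le> l * (1 + 2 * t * Y + t\<^sup>2 * Z)"
      using exp1 exp2 vl by simp
    moreover have "2 * t * Z + t\<^sup>2 * q = (l + 2 * t * X + t\<^sup>2 * qf A n r r) - l * (1 + 2 * t * Y + t\<^sup>2 * Z)"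
      unfolding q_def cXY by (simp add: algebra_simps)
    ultimately show ?thesis by linarith
  qed
  have Z0: "Z \<ge> 0" unfolding Z_def by (intro sum_nonneg) auto
  have "Z = 0" by (rule quad_zero[OF key Z0])
  hence "\<forall>i\<in>{..<n}. (r i)\<^sup>2 = 0" unfolding Z_def
    by (subst sum_nonneg_eq_0_iff[symmetric]) auto
  hence r0: "\<And>i. i < n \<Longrightarrow> Av i = l * v i" unfolding r_def by auto
  have dimA: "dim_row A = n" "dim_col A = n" using A by auto
  have ev: "eigenvector A (vec n v) l" unfolding eigenvector_def
  proof (intro conjI)
    show "vec n v \<in> carrier_vec (dim_row A)" using dimA by simp
    show "vec n v \<noteq> 0\<^sub>v (dim_row A)"
    proof
      assume "vec n v = 0\<^sub>v (dim_row A)"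
      hence "\<And>i. i < n \<Longrightarrow> v i = 0" using dimA by (metis index_vec index_zero_vec(1))
      hence "(\<Sum>i<n. (v i)\<^sup>2) = 0" by simp
      thus False using v1 by simp
    qed
    show "A *\<^sub>v vec n v = l \<cdot>\<^sub>v vec n v"
    proof (rule eq_vecI)
      fix i assume "i < dim_vec (l \<cdot>\<^sub>v vec n v)"
      hence i: "i < n" by simp
      have "(A *\<^sub>v vec n v) $ i = row A i \<bullet> vec n v" using i dimA by simp
      also have "\<dots> = (\<Sum>k\<in>{0..<n}. A $$ (i,k) * v k)"
        unfolding scalar_prod_def using i dimA by (intro sum.cong) auto
      also have "\<dots> = Av i" unfolding Av_def by (simp add: lessThan_atLeast0)
      also have "\<dots> = (l \<cdot>\<^sub>v vec n v) $ i" using r0[OF i] i by simp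
      finally show "(A *\<^sub>v vec n v) $ i = (l \<cdot>\<^sub>v vec n v) $ i" .
    qed (simp add: dimA)
  qed
  hence "l \<in> spectrum A" unfolding spectrum_def eigenvalue_def by auto
  hence le: "l \<le> eig_max A" unfolding eig_max_def using card_finite_spectrum(1)[OF A]
    by (simp add: spectrum_def)
  have N0: "(\<Sum>i<n. (u i)\<^sup>2) \<ge> 0" by (intro sum_nonneg) auto
  have "qf A n u u \<le> l * (\<Sum>i<n. (u i)\<^sup>2)" by (rule R)
  also have "\<dots> \<le> eig_max A * (\<Sum>i<n. (u i)\<^sup>2)" by (rule mult_right_mono[OF le N0])
  finally show ?thesis .
qed


lemma abs_prod_le: "\<bar>(a::real) * b\<bar> \<le> a\<^sup>2 + b\<^sup>2"
proof -
  have "2 * (\<bar>a\<bar> * \<bar>b\<bar>) \<le> a\<^sup>2 + b\<^sup>2" using sum_squares_bound[of "\<bar>a\<bar>" "\<bar>b\<bar>"] by (simp add: mult.assoc)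
  moreover have "\<bar>a\<bar> * \<bar>b\<bar> \<ge> 0" by simp
  ultimately show ?thesis unfolding abs_mult by linarith
qed

lemma second_moment_bound:
  fixes M :: "'a measure" and \<delta> :: "nat \<Rightarrow> 'a \<Rightarrow> real" and c :: "nat \<Rightarrow> real"
  assumes M: "prob_space M"
    and rv: "\<And>j. j \<ge> 1 \<Longrightarrow> \<delta> j \<in> borel_measurable M"
    and sq: "\<And>j. j \<ge> 1 \<Longrightarrow> integrable M (\<lambda>\<omega>. (\<delta> j \<omega>)\<^sup>2)"
    and mean: "\<And>j. j \<ge> 1 \<Longrightarrow> integrable M (\<delta> j) \<and> prob_space.expectation M (\<delta> j) = 0"
    and QD: "Q = Matrix.mat n n (\<lambda>(i, k).
                 prob_space.expectation M (\<lambda>\<omega>. (\<delta> (Suc i) \<omega> - prob_space.expectation M (\<delta> (Suc i)))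
                                          * (\<delta> (Suc k) \<omega> - prob_space.expectation M (\<delta> (Suc k)))))"
    and n: "n \<ge> 1" and C: "eig_max Q \<le> C"
  shows "integrable M (\<lambda>\<omega>. (\<Sum>j=1..n. c j * \<delta> j \<omega>)\<^sup>2)"
    "integral\<^sup>L M (\<lambda>\<omega>. (\<Sum>j=1..n. c j * \<delta> j \<omega>)\<^sup>2) \<le> C * (\<Sum>j=1..n. (c j)\<^sup>2)"
proof -
  interpret prob_space M by (rule M)
  have ip: "integrable M (\<lambda>\<omega>. \<delta> i \<omega> * \<delta> j \<omega>)" if "i \<ge> 1" "j \<ge> 1" for i j
  proof (rule Bochner_Integration.integrable_bound[of _ "\<lambda>\<omega>. (\<delta> i \<omega>)\<^sup>2 + (\<delta> j \<omega>)\<^sup>2"])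
    show "integrable M (\<lambda>\<omega>. (\<delta> i \<omega>)\<^sup>2 + (\<delta> j \<omega>)\<^sup>2)" using sq that by auto
    show "(\<lambda>\<omega>. \<delta> i \<omega> * \<delta> j \<omega>) \<in> borel_measurable M" using rv that by auto
    show "AE x in M. norm (\<delta> i x * \<delta> j x) \<le> norm ((\<delta> i x)\<^sup>2 + (\<delta> j x)\<^sup>2)"
      using abs_prod_le by (auto intro!: AE_I2 simp del: power2_abs)
  qed
  have expand: "(\<Sum>j=1..n. c j * \<delta> j \<omega>)\<^sup>2 = (\<Sum>j=1..n. \<Sum>l=1..n. c j * c l * (\<delta> j \<omega> * \<delta> l \<omega>))" for \<omega>
    unfolding power2_eq_square sum_product by (intro sum.cong refl) (simp add: algebra_simps)
  have iterm: "integrable M (\<lambda>\<omega>. c j * c l * (\<delta> j \<omega> * \<delta> l \<omega>))" if "j \<in> {1..n}" "l \<in> {1..n}" for j l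
    using ip[of j l] that by auto
  show "integrable M (\<lambda>\<omega>. (\<Sum>j=1..n. c j * \<delta> j \<omega>)\<^sup>2)"
    unfolding expand using iterm by (intro Bochner_Integration.integrable_sum) auto
  have "integral\<^sup>L M (\<lambda>\<omega>. (\<Sum>j=1..n. c j * \<delta> j \<omega>)\<^sup>2)
       = (\<Sum>j=1..n. \<Sum>l=1..n. c j * c l * integral\<^sup>L M (\<lambda>\<omega>. \<delta> j \<omega> * \<delta> l \<omega>))"
    unfolding expand using iterm
    by (subst Bochner_Integration.integral_sum, force intro!: Bochner_Integration.integrable_sum)
       (intro sum.cong refl, subst Bochner_Integration.integral_sum, auto)
  also have "\<dots> = qf Q n (\<lambda>i. c (Suc i)) (\<lambda>i. c (Suc i))"
  proof -
    have "\<And>i k. i < n \<Longrightarrow> k < n \<Longrightarrow> Q $$ (i,k) = integral\<^sup>L M (\<lambda>\<omega>. \<delta> (Suc i) \<omega> * \<delta> (Suc k) \<omega>)"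
      unfolding QD using mean by simp
    thus ?thesis unfolding qf_def One_nat_def sum.atLeast1_atMost_eq
      by (intro sum.cong refl) (auto simp: algebra_simps)
  qed
  also have "\<dots> \<le> eig_max Q * (\<Sum>i<n. (c (Suc i))\<^sup>2)"
  proof (rule rayleigh_eig[OF _ n])
    show "Q \<in> carrier_mat n n" unfolding QD by simp
    show "\<And>i k. i < n \<Longrightarrow> k < n \<Longrightarrow> Q $$ (i, k) = Q $$ (k, i)"
      unfolding QD by (simp add: mult.commute)
  qed
  also have "\<dots> \<le> C * (\<Sum>i<n. (c (Suc i))\<^sup>2)"
    by (rule mult_right_mono[OF C]) (auto intro: sum_nonneg)
  also have "\<dots> = C * (\<Sum>j=1..n. (c j)\<^sup>2)"
    unfolding One_nat_def sum.atLeast1_atMost_eq ..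
  finally show "integral\<^sup>L M (\<lambda>\<omega>. (\<Sum>j=1..n. c j * \<delta> j \<omega>)\<^sup>2) \<le> C * (\<Sum>j=1..n. (c j)\<^sup>2)" .
qed


lemma tail_bound:
  fixes M :: "'a measure" and \<delta> :: "nat \<Rightarrow> 'a \<Rightarrow> real" and c :: "nat \<Rightarrow> real"
  assumes M: "prob_space M"
    and rv: "\<And>j. j \<ge> 1 \<Longrightarrow> \<delta> j \<in> borel_measurable M"
    and sq: "\<And>j. j \<ge> 1 \<Longrightarrow> integrable M (\<lambda>\<omega>. (\<delta> j \<omega>)\<^sup>2)"
    and mean: "\<And>j. j \<ge> 1 \<Longrightarrow> integrable M (\<delta> j) \<and> prob_space.expectation M (\<delta> j) = 0"
    and QD: "Q = Matrix.mat n n (\<lambda>(i, k).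
                 prob_space.expectation M (\<lambda>\<omega>. (\<delta> (Suc i) \<omega> - prob_space.expectation M (\<delta> (Suc i)))
                                          * (\<delta> (Suc k) \<omega> - prob_space.expectation M (\<delta> (Suc k)))))"
    and n: "n \<ge> 1" and C: "eig_max Q \<le> C" and e: "e > 0"
  shows "measure M {\<omega> \<in> space M. e < \<bar>\<Sum>j=1..n. c j * \<delta> j \<omega>\<bar>} \<le> C * (\<Sum>j=1..n. (c j)\<^sup>2) / e\<^sup>2"
proof -
  interpret prob_space M by (rule M)
  define Z where "Z = (\<lambda>\<omega>. \<Sum>j=1..n. c j * \<delta> j \<omega>)"
  have Zm[measurable]: "Z \<in> borel_measurable M" unfolding Z_def
    using rv by (intro borel_measurable_sum) auto
  note mb = second_moment_bound[OF M rv sq mean QD n C, of c]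
  have "measure M {\<omega> \<in> space M. e < \<bar>Z \<omega>\<bar>} \<le> measure M {\<omega> \<in> space M. e\<^sup>2 \<le> (Z \<omega>)\<^sup>2}"
  proof (rule finite_measure_mono)
    show "{\<omega> \<in> space M. e < \<bar>Z \<omega>\<bar>} \<subseteq> {\<omega> \<in> space M. e\<^sup>2 \<le> (Z \<omega>)\<^sup>2}"
      using e by (auto simp: abs_le_square_iff[symmetric])
    show "{\<omega> \<in> space M. e\<^sup>2 \<le> (Z \<omega>)\<^sup>2} \<in> sets M" by measurable
  qed
  also have "\<dots> \<le> integral\<^sup>L M (\<lambda>\<omega>. (Z \<omega>)\<^sup>2) / e\<^sup>2"
    by (rule integral_Markov_inequality_measure[of M _ "space M"]) (use mb(1) e in \<open>auto simp: Z_def\<close>)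
  also have "\<dots> \<le> C * (\<Sum>j=1..n. (c j)\<^sup>2) / e\<^sup>2"
    by (rule divide_right_mono) (use mb(2) in \<open>auto simp: Z_def\<close>)
  finally show ?thesis unfolding Z_def .
qed

lemma quad_zero2:
  fixes c q :: real
  assumes "\<And>h. 0 \<le> 2 * h * c + h\<^sup>2 * q"
  shows "c = 0"
proof (rule ccontr)
  assume c: "c \<noteq> 0"
  define t where "t = 1 / (\<bar>q\<bar> + 1)"
  have t: "t > 0" by (simp add: t_def add_pos_nonneg)
  have tq: "t * \<bar>q\<bar> \<le> 1" unfolding t_def by (simp add: field_simps)
  have "t\<^sup>2 * q \<le> t\<^sup>2 * \<bar>q\<bar>" by (rule mult_left_mono) auto
  also have "\<dots> = t * (t * \<bar>q\<bar>)" by (simp add: power2_eq_square)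
  also have "\<dots> \<le> t * 1" by (rule mult_left_mono[OF tq]) (use t in auto)
  finally have tq2: "t\<^sup>2 * q \<le> t" by simp
  have c2: "c\<^sup>2 > 0" using c by simp
  have "2 * (- c * t) * c + (- c * t)\<^sup>2 * q = c\<^sup>2 * (t\<^sup>2 * q - 2 * t)"
    by (simp add: power2_eq_square algebra_simps)
  also have "\<dots> \<le> c\<^sup>2 * (- t)" by (rule mult_left_mono) (use tq2 in auto)
  also have "\<dots> < 0" using c2 t by (simp add: mult_pos_pos)
  finally show False using assms[of "- c * t"] by simp
qed

lemma ols_solution:
  fixes xx yy :: "nat \<Rightarrow> real"
  assumes n: "n \<ge> 1" and Sxx: "(\<Sum>j=1..n. (xx j - xbar xx n)\<^sup>2) > 0"
    and LSm: "\<And>b t. RSS xx yy n bh th \<le> RSS xx yy n b t"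
  shows "th = (\<Sum>j=1..n. (xx j - xbar xx n) * yy j) / (\<Sum>j=1..n. (xx j - xbar xx n)\<^sup>2)"
    "bh = xbar yy n - th * xbar xx n"
proof -
  define res where "res = (\<lambda>j. yy j - bh - th * xx j)"
  define xb where "xb = xbar xx n"
  have nr: "real n > 0" using n by simp
  have r1: "RSS xx yy n (bh + h) th = RSS xx yy n bh th + 2 * h * (- (\<Sum>j=1..n. res j)) + h\<^sup>2 * real n" for h
  proof -
    have "RSS xx yy n (bh + h) th = (\<Sum>j=1..n. (res j)\<^sup>2 - 2 * h * res j + h\<^sup>2)"
      unfolding RSS_def res_def by (intro sum.cong refl) (simp add: power2_eq_square algebra_simps)
    thus ?thesis unfolding RSS_def res_def
      by (simp add: sum.distrib sum_subtractf sum_distrib_left[symmetric]; simp add: algebra_simps)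
  qed
  have "- (\<Sum>j=1..n. res j) = 0"
    by (rule quad_zero2[of _ "real n"]) (use LSm[of "bh + _" th] r1 in \<open>auto\<close>)
  hence s1: "(\<Sum>j=1..n. res j) = 0" by simp
  have r2: "RSS xx yy n bh (th + h) = RSS xx yy n bh th + 2 * h * (- (\<Sum>j=1..n. res j * xx j)) + h\<^sup>2 * (\<Sum>j=1..n. (xx j)\<^sup>2)" for h
  proof -
    have "RSS xx yy n bh (th + h) = (\<Sum>j=1..n. (res j)\<^sup>2 - 2 * h * (res j * xx j) + h\<^sup>2 * (xx j)\<^sup>2)"
      unfolding RSS_def res_def by (intro sum.cong refl) (simp add: power2_eq_square algebra_simps)
    thus ?thesis unfolding RSS_def res_def
      by (simp add: sum.distrib sum_subtractf sum_distrib_left[symmetric])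
  qed
  have "- (\<Sum>j=1..n. res j * xx j) = 0"
    by (rule quad_zero2[of _ "\<Sum>j=1..n. (xx j)\<^sup>2"]) (use LSm[of bh "th + _"] r2 in \<open>auto\<close>)
  hence s2: "(\<Sum>j=1..n. res j * xx j) = 0" by simp
  have sumx: "(\<Sum>j=1..n. xx j) = real n * xb" unfolding xb_def xbar_def using nr by simp
  have sumy: "(\<Sum>j=1..n. yy j) = real n * xbar yy n" unfolding xbar_def using nr by simp
  have "(\<Sum>j=1..n. res j) = real n * xbar yy n - real n * bh - th * (real n * xb)"
    unfolding res_def using sumx sumy by (simp add: sum_subtractf sum_distrib_left[symmetric])
  hence "real n * (xbar yy n - bh - th * xb) = 0" using s1 by (simp add: algebra_simps)
  hence bh: "bh = xbar yy n - th * xb" using nr by simp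
  thus "bh = xbar yy n - th * xbar xx n" unfolding xb_def .
  have d0: "(\<Sum>j=1..n. (xx j - xb)) = 0" using sumx by (simp add: sum_subtractf)
  have "0 = (\<Sum>j=1..n. res j * xx j) - xb * (\<Sum>j=1..n. res j)" using s1 s2 by simp
  also have "\<dots> = (\<Sum>j=1..n. res j * (xx j - xb))"
    by (simp add: sum_distrib_left sum_subtractf algebra_simps)
  also have "\<dots> = (\<Sum>j=1..n. (xx j - xb) * yy j) - bh * (\<Sum>j=1..n. (xx j - xb))
          - th * (\<Sum>j=1..n. (xx j - xb) * xx j)"
    unfolding res_def by (simp add: sum_distrib_left sum_subtractf algebra_simps)
  also have "(\<Sum>j=1..n. (xx j - xb) * xx j) = (\<Sum>j=1..n. (xx j - xb)\<^sup>2) + xb * (\<Sum>j=1..n. (xx j - xb))"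
    by (simp add: sum_distrib_left sum.distrib[symmetric] power2_eq_square algebra_simps)
  finally have "0 = (\<Sum>j=1..n. (xx j - xb) * yy j) - th * (\<Sum>j=1..n. (xx j - xb)\<^sup>2)"
    using d0 by simp
  thus "th = (\<Sum>j=1..n. (xx j - xbar xx n) * yy j) / (\<Sum>j=1..n. (xx j - xbar xx n)\<^sup>2)"
    using Sxx unfolding xb_def by (simp add: field_simps)
qed


lemma dev_sum0:
  assumes "n \<ge> 1"
  shows "(\<Sum>j=1..n. (xx j - xbar xx n)) = 0"
proof -
  have "(\<Sum>j=1..n. xx j) = real n * xbar xx n" unfolding xbar_def using assms by simp
  thus ?thesis by (simp add: sum_subtractf)
qed

lemma dev_x:
  assumes "n \<ge> 1"
  shows "(\<Sum>j=1..n. (xx j - xbar xx n) * xx j) = (\<Sum>j=1..n. (xx j - xbar xx n)\<^sup>2)"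
proof -
  have "(\<Sum>j=1..n. (xx j - xbar xx n) * xx j) = (\<Sum>j=1..n. (xx j - xbar xx n)\<^sup>2 + xbar xx n * (xx j - xbar xx n))"
    by (intro sum.cong refl) (simp add: power2_eq_square algebra_simps)
  also have "\<dots> = (\<Sum>j=1..n. (xx j - xbar xx n)\<^sup>2) + xbar xx n * (\<Sum>j=1..n. (xx j - xbar xx n))"
    by (simp add: sum.distrib sum_distrib_left)
  finally show ?thesis using dev_sum0[OF assms] by simp
qed

lemma exp_dev:
  fixes b MF e :: real
  assumes MF: "MF > 0" and e: "e > 0" and d: "e < \<bar>exp b - MF\<bar>"
  shows "ln (1 + e / MF) < \<bar>b - ln MF\<bar>"
proof -
  define t where "t = e / MF"
  have t: "t > 0" using MF e by (simp add: t_def)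
  show ?thesis
  proof (cases "exp b > MF")
    case True
    hence "exp b > MF + e" using d by simp
    hence "b > ln (MF + e)" using MF e by (metis exp_less_cancel_iff exp_ln add_pos_pos)
    moreover have "ln (MF + e) = ln MF + ln (1 + t)"
    proof -
      have "MF + e = MF * (1 + t)" using MF by (simp add: t_def field_simps)
      thus ?thesis using MF t by (simp add: ln_mult)
    qed
    ultimately show ?thesis unfolding t_def by simp
  next
    case False
    hence lt: "exp b < MF - e" using d by simp
    hence pos: "MF - e > 0" using exp_gt_zero[of b] by linarith
    hence t1: "t < 1" using MF by (simp add: t_def field_simps)
    have "b < ln (MF - e)" using lt pos by (metis exp_less_cancel_iff exp_ln)
    moreover have "ln (MF - e) = ln MF + ln (1 - t)"
    proof -
      have "MF - e = MF * (1 - t)" using MF by (simp add: t_def field_simps)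
      thus ?thesis using MF t1 by (simp add: ln_mult)
    qed
    moreover have "ln (1 - t) + ln (1 + t) < 0"
    proof -
      have "ln (1 - t) + ln (1 + t) = ln ((1 - t) * (1 + t))" using t t1 by (simp add: ln_mult)
      also have "\<dots> < 0"
      proof (rule ln_less_zero)
        show "0 < (1 - t) * (1 + t)" using t t1 by (intro mult_pos_pos) auto
        have "t * t > 0" using t by simp
        thus "(1 - t) * (1 + t) < 1" by (simp add: algebra_simps)
      qed
      finally show ?thesis .
    qed
    moreover have "ln (1 + t) > 0" using t by simp
    ultimately show ?thesis unfolding t_def by linarith
  qed
qed

theorem mainTheorem7:
  fixes F :: "'b::euclidean_space set"
    and s MF :: real
    and eps :: "nat \<Rightarrow> real"
    and M :: "'a measure"
    and \<delta> y :: "nat \<Rightarrow> 'a \<Rightarrow> real"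
    and \<gamma> \<mu> :: real
    and bhat shat :: "nat \<Rightarrow> 'a \<Rightarrow> real"
  defines "x \<equiv> (\<lambda>j. - ln (eps j))"
    and "Q \<equiv> (\<lambda>n. Matrix.mat n n (\<lambda>(i, k).
                 prob_space.expectation M (\<lambda>\<omega>. (\<delta> (Suc i) \<omega> - prob_space.expectation M (\<delta> (Suc i)))
                                          * (\<delta> (Suc k) \<omega> - prob_space.expectation M (\<delta> (Suc k))))))"
    and "\<alpha> \<equiv> 1 - max \<gamma> \<mu> - 2 * max 0 (\<mu> - \<gamma>)"
  assumes F_bdd: "bounded F" and F_ne: "F \<noteq> {}"
    and F_dim: "minkowski_dim F s"
    and F_cont: "has_minkowski_content F s MF" and MF_pos: "0 < MF"
    and eps_pos: "\<And>j. j \<ge> 1 \<Longrightarrow> 0 < eps j"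
    and eps_dec: "\<And>j. j \<ge> 1 \<Longrightarrow> eps (Suc j) < eps j"
    and M: "prob_space M"
    and \<delta>_rv: "\<And>j. j \<ge> 1 \<Longrightarrow> \<delta> j \<in> borel_measurable M"
    and \<delta>_sq: "\<And>j. j \<ge> 1 \<Longrightarrow> integrable M (\<lambda>\<omega>. (\<delta> j \<omega>)\<^sup>2)"
    and \<delta>_mean: "\<And>j. j \<ge> 1 \<Longrightarrow> integrable M (\<delta> j) \<and> prob_space.expectation M (\<delta> j) = 0"
    and \<delta>_var: "\<And>j. j \<ge> 1 \<Longrightarrow> prob_space.variance M (\<delta> j) > 0"
    and Q_min: "\<exists>c>0. \<forall>n\<ge>1. c \<le> eig_min (Q n)"
    and Q_max: "\<exists>C. \<forall>n\<ge>1. eig_max (Q n) \<le> C"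
    and y_def: "\<And>j \<omega>. j \<ge> 1 \<Longrightarrow> \<omega> \<in> space M \<Longrightarrow> y j \<omega> = ln MF + s * x j + \<delta> j \<omega>"
    and S_growth: "Stilde2 x \<in> \<Theta>(\<lambda>n. real n powr \<gamma>)"
    and xbar_growth: "xbar x \<in> O(\<lambda>n. real n powr (\<mu> / 2))"
    and \<gamma>_nonneg: "0 \<le> \<gamma>" and \<mu>_nonneg: "0 \<le> \<mu>"
    and \<alpha>_pos: "0 < \<alpha>"
    and LS: "\<And>n \<omega> b t. \<omega> \<in> space M \<Longrightarrow>
               RSS x (\<lambda>j. y j \<omega>) n (bhat n \<omega>) (shat n \<omega>) \<le> RSS x (\<lambda>j. y j \<omega>) n b t"
  shows "\<forall>e>0.
           (\<lambda>n. measure M {\<omega> \<in> space M. \<bar>shat n \<omega> - s\<bar> > e}) \<in> O(\<lambda>n. real n powr (- \<alpha>)) \<and>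
           (\<lambda>n. measure M {\<omega> \<in> space M. \<bar>exp (bhat n \<omega>) - MF\<bar> > e}) \<in> O(\<lambda>n. real n powr (- \<alpha>))"
proof -
  interpret P: prob_space M by (rule M)
  have Qeq: "\<And>n. Q n = Matrix.mat n n (\<lambda>(i, k).
                 prob_space.expectation M (\<lambda>\<omega>. (\<delta> (Suc i) \<omega> - prob_space.expectation M (\<delta> (Suc i)))
                                          * (\<delta> (Suc k) \<omega> - prob_space.expectation M (\<delta> (Suc k)))))"
    unfolding Q_def by simp
  obtain C0 where C0: "\<And>n. n \<ge> 1 \<Longrightarrow> eig_max (Q n) \<le> C0" using Q_max by blast
  define C where "C = max C0 1"
  have C: "\<And>n. n \<ge> 1 \<Longrightarrow> eig_max (Q n) \<le> C" using C0 unfolding C_def by force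
  have Cpos: "C > 0" unfolding C_def by simp
  have "Stilde2 x \<in> \<Omega>(\<lambda>n. real n powr \<gamma>)" using S_growth by blast
  then obtain c1 where c1: "c1 > 0" and ev1: "eventually (\<lambda>n. norm (Stilde2 x n) \<ge> c1 * norm (real n powr \<gamma>)) at_top"
    by (rule landau_omega.bigE)
  obtain K where K: "K > 0" and ev2: "eventually (\<lambda>n. norm (xbar x n) \<le> K * norm (real n powr (\<mu> / 2))) at_top"
    using xbar_growth by (rule landau_o.bigE)
  obtain N1 where N1: "\<And>n. n \<ge> N1 \<Longrightarrow> norm (Stilde2 x n) \<ge> c1 * norm (real n powr \<gamma>)"
    using ev1 unfolding eventually_at_top_linorder by blast
  obtain N2 where N2: "\<And>n. n \<ge> N2 \<Longrightarrow> norm (xbar x n) \<le> K * norm (real n powr (\<mu> / 2))"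
    using ev2 unfolding eventually_at_top_linorder by blast
  define N where "N = max (max N1 N2) 1"
  have alpha1: "\<alpha> \<le> 1" and alpha2: "\<mu> - 1 - \<gamma> \<le> - \<alpha>" and alpha3: "- (1 + \<gamma>) \<le> - \<alpha>"
    unfolding \<alpha>_def using \<gamma>_nonneg \<mu>_nonneg by (auto simp: max_def)
  define Sxx where "Sxx = (\<lambda>n. \<Sum>j=1..n. (x j - xbar x n)\<^sup>2)"
  define a where "a = (\<lambda>n j. (x j - xbar x n) / Sxx n)"
  define bb where "bb = (\<lambda>n j. 1 / real n - a n j * xbar x n)"
  have nfacts: "real n \<ge> 1 \<and> Sxx n \<ge> c1 * real n powr (1 + \<gamma>) \<and> Sxx n > 0 \<and>
      (xbar x n)\<^sup>2 \<le> K\<^sup>2 * real n powr \<mu>" if "n \<ge> N" for n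
  proof -
    have n1: "n \<ge> 1" and nN1: "n \<ge> N1" and nN2: "n \<ge> N2" using that unfolding N_def by auto
    have rn: "real n \<ge> 1" using n1 by simp
    have "Sxx n = real n * Stilde2 x n" unfolding Sxx_def Stilde2_def using rn by simp
    moreover have "Stilde2 x n \<ge> c1 * real n powr \<gamma>"
    proof -
      have "Stilde2 x n \<ge> 0" unfolding Stilde2_def by (intro divide_nonneg_nonneg sum_nonneg) auto
      thus ?thesis using N1[OF nN1] rn by simp
    qed
    ultimately have "Sxx n \<ge> real n * (c1 * real n powr \<gamma>)" using rn by (simp add: mult_left_mono)
    also have "real n * (c1 * real n powr \<gamma>) = c1 * real n powr (1 + \<gamma>)"
      using rn by (simp add: powr_add)
    finally have S1: "Sxx n \<ge> c1 * real n powr (1 + \<gamma>)" .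
    have "c1 * real n powr (1 + \<gamma>) > 0" using c1 rn by simp
    hence S2: "Sxx n > 0" using S1 by linarith
    have "\<bar>xbar x n\<bar> \<le> K * real n powr (\<mu> / 2)" using N2[OF nN2] rn by simp
    hence "\<bar>xbar x n\<bar>\<^sup>2 \<le> (K * real n powr (\<mu> / 2))\<^sup>2" by (rule power_mono) simp
    also have "(K * real n powr (\<mu> / 2))\<^sup>2 = K\<^sup>2 * real n powr \<mu>"
      using rn by (simp add: power_mult_distrib power2_eq_square powr_add[symmetric])
    finally show ?thesis using rn S1 S2 by simp
  qed
  have repr: "shat n \<omega> - s = (\<Sum>j=1..n. a n j * \<delta> j \<omega>) \<and>
              bhat n \<omega> - ln MF = (\<Sum>j=1..n. bb n j * \<delta> j \<omega>)"
    if "n \<ge> N" and \<omega>: "\<omega> \<in> space M" for n \<omega>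
  proof -
    have n1: "n \<ge> 1" using that unfolding N_def by auto
    have rn: "real n \<ge> 1" using n1 by simp
    have Sp: "Sxx n > 0" using nfacts[OF that(1)] by simp
    note ols = ols_solution[OF n1 Sp[unfolded Sxx_def] LS[OF \<omega>, of n]]
    have hy: "\<And>j. j \<in> {1..n} \<Longrightarrow> y j \<omega> = ln MF + s * x j + \<delta> j \<omega>" using y_def \<omega> by auto
    have "(\<Sum>j=1..n. (x j - xbar x n) * y j \<omega>)
        = (\<Sum>j=1..n. ln MF * (x j - xbar x n) + s * ((x j - xbar x n) * x j) + (x j - xbar x n) * \<delta> j \<omega>)"
      using hy by (intro sum.cong refl) (simp add: algebra_simps)
    also have "\<dots> = ln MF * (\<Sum>j=1..n. (x j - xbar x n)) + s * (\<Sum>j=1..n. (x j - xbar x n) * x j)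
          + (\<Sum>j=1..n. (x j - xbar x n) * \<delta> j \<omega>)"
      by (simp add: sum.distrib sum_distrib_left)
    also have "\<dots> = s * Sxx n + (\<Sum>j=1..n. (x j - xbar x n) * \<delta> j \<omega>)"
      unfolding dev_sum0[OF n1] dev_x[OF n1] Sxx_def by simp
    finally have Sxy: "(\<Sum>j=1..n. (x j - xbar x n) * y j \<omega>) = s * Sxx n + (\<Sum>j=1..n. (x j - xbar x n) * \<delta> j \<omega>)" .
    have sh: "shat n \<omega> - s = (\<Sum>j=1..n. a n j * \<delta> j \<omega>)"
    proof -
      have "shat n \<omega> = (s * Sxx n + (\<Sum>j=1..n. (x j - xbar x n) * \<delta> j \<omega>)) / Sxx n"
        using ols(1) Sxy unfolding Sxx_def by simp
      also have "\<dots> = s + (\<Sum>j=1..n. a n j * \<delta> j \<omega>)"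
        using Sp unfolding a_def by (simp add: add_divide_distrib sum_divide_distrib)
      finally show ?thesis by simp
    qed
    have yb: "xbar (\<lambda>j. y j \<omega>) n = ln MF + s * xbar x n + (\<Sum>j=1..n. \<delta> j \<omega>) / real n"
    proof -
      have "(\<Sum>j=1..n. y j \<omega>) = (\<Sum>j=1..n. ln MF + s * x j + \<delta> j \<omega>)"
        using hy by (intro sum.cong refl) auto
      also have "\<dots> = real n * ln MF + s * (\<Sum>j=1..n. x j) + (\<Sum>j=1..n. \<delta> j \<omega>)"
        by (simp add: sum.distrib sum_distrib_left)
      finally show ?thesis unfolding xbar_def using rn by (simp add: field_simps)
    qed
    have "bhat n \<omega> - ln MF = (\<Sum>j=1..n. \<delta> j \<omega>) / real n - (shat n \<omega> - s) * xbar x n"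
      using ols(2) yb by (simp add: algebra_simps)
    also have "\<dots> = (\<Sum>j=1..n. bb n j * \<delta> j \<omega>)"
      unfolding sh bb_def by (simp add: sum_divide_distrib sum_distrib_left sum_distrib_right
          sum_subtractf algebra_simps)
    finally show ?thesis using sh by simp
  qed
  have sqa: "(\<Sum>j=1..n. (a n j)\<^sup>2) = 1 / Sxx n" if "n \<ge> N" for n
  proof -
    have Sp: "Sxx n > 0" using nfacts[OF that] by simp
    have "(\<Sum>j=1..n. (a n j)\<^sup>2) = (\<Sum>j=1..n. (x j - xbar x n)\<^sup>2) / (Sxx n)\<^sup>2"
      unfolding a_def by (simp add: power_divide sum_divide_distrib)
    thus ?thesis using Sp unfolding Sxx_def by (simp add: power2_eq_square)
  qed
  have sqb: "(\<Sum>j=1..n. (bb n j)\<^sup>2) = 1 / real n + (xbar x n)\<^sup>2 / Sxx n" if "n \<ge> N" for n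
  proof -
    have n1: "n \<ge> 1" using that unfolding N_def by auto
    have rn: "real n \<ge> 1" using n1 by simp
    have sa: "(\<Sum>j=1..n. a n j) = 0" unfolding a_def using dev_sum0[OF n1, of x]
      by (simp add: sum_divide_distrib[symmetric])
    have "(\<Sum>j=1..n. (bb n j)\<^sup>2) = (\<Sum>j=1..n. 1 / (real n)\<^sup>2 - 2 * (xbar x n / real n) * a n j + (xbar x n)\<^sup>2 * (a n j)\<^sup>2)"
      unfolding bb_def by (intro sum.cong refl) (simp add: power2_eq_square field_simps)
    also have "\<dots> = real n / (real n)\<^sup>2 - 2 * (xbar x n / real n) * (\<Sum>j=1..n. a n j) + (xbar x n)\<^sup>2 * (\<Sum>j=1..n. (a n j)\<^sup>2)"
      by (simp add: sum.distrib sum_subtractf sum_distrib_left)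
    also have "\<dots> = 1 / real n + (xbar x n)\<^sup>2 / Sxx n"
      unfolding sa sqa[OF that] using rn by (simp add: power2_eq_square)
    finally show ?thesis .
  qed
  show ?thesis
  proof (intro allI impI conjI)
    fix e :: real assume e: "e > 0"
    show "(\<lambda>n. measure M {\<omega> \<in> space M. \<bar>shat n \<omega> - s\<bar> > e}) \<in> O(\<lambda>n. real n powr (- \<alpha>))"
    proof (rule landau_o.bigI)
      show "C / (e\<^sup>2 * c1) > 0" using Cpos e c1 by simp
      show "eventually (\<lambda>n. norm (measure M {\<omega> \<in> space M. \<bar>shat n \<omega> - s\<bar> > e})
              \<le> C / (e\<^sup>2 * c1) * norm (real n powr (- \<alpha>))) at_top"
        unfolding eventually_at_top_linorder
      proof (intro exI allI impI)
        fix n assume nN: "n \<ge> N"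
        have n1: "n \<ge> 1" using nN unfolding N_def by auto
        have rn: "real n \<ge> 1" using n1 by simp
        have nf: "Sxx n \<ge> c1 * real n powr (1 + \<gamma>)" "Sxx n > 0" using nfacts[OF nN] by auto
        have Zm[measurable]: "(\<lambda>\<omega>. \<Sum>j=1..n. a n j * \<delta> j \<omega>) \<in> borel_measurable M"
          using \<delta>_rv by (intro borel_measurable_sum) auto
        have "measure M {\<omega> \<in> space M. \<bar>shat n \<omega> - s\<bar> > e}
            \<le> measure M {\<omega> \<in> space M. e < \<bar>\<Sum>j=1..n. a n j * \<delta> j \<omega>\<bar>}"
        proof (rule P.finite_measure_mono)
          show "{\<omega> \<in> space M. \<bar>shat n \<omega> - s\<bar> > e} \<subseteq> {\<omega> \<in> space M. e < \<bar>\<Sum>j=1..n. a n j * \<delta> j \<omega>\<bar>}"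
            using repr[OF nN] by auto
        qed measurable
        also have "\<dots> \<le> C * (\<Sum>j=1..n. (a n j)\<^sup>2) / e\<^sup>2"
          by (rule tail_bound[OF M \<delta>_rv \<delta>_sq \<delta>_mean Qeq n1 C[OF n1] e])
        also have "\<dots> = C / e\<^sup>2 * (1 / Sxx n)" using sqa[OF nN] by simp
        also have "\<dots> \<le> C / e\<^sup>2 * (1 / (c1 * real n powr (1 + \<gamma>)))"
          using nf c1 Cpos e rn by (intro mult_left_mono divide_left_mono) auto
        also have "\<dots> = C / (e\<^sup>2 * c1) * real n powr (- (1 + \<gamma>))"
        proof -
          have "real n powr (- (1 + \<gamma>)) = 1 / real n powr (1 + \<gamma>)" by (rule powr_minus_divide)
          thus ?thesis by simp
        qed
        also have "\<dots> \<le> C / (e\<^sup>2 * c1) * real n powr (- \<alpha>)"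
          using Cpos e c1 rn alpha3 by (intro mult_left_mono powr_mono) auto
        finally show "norm (measure M {\<omega> \<in> space M. \<bar>shat n \<omega> - s\<bar> > e})
              \<le> C / (e\<^sup>2 * c1) * norm (real n powr (- \<alpha>))" by simp
      qed
    qed
    define e' where "e' = ln (1 + e / MF)"
    have e': "e' > 0" unfolding e'_def using divide_pos_pos[OF e MF_pos] by (intro ln_gt_zero) simp
    define K2 where "K2 = C / e'\<^sup>2 * (1 + K\<^sup>2 / c1)"
    show "(\<lambda>n. measure M {\<omega> \<in> space M. \<bar>exp (bhat n \<omega>) - MF\<bar> > e}) \<in> O(\<lambda>n. real n powr (- \<alpha>))"
    proof (rule landau_o.bigI)
      show "K2 > 0" unfolding K2_def using Cpos e' c1 by (simp add: add_pos_nonneg)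
      show "eventually (\<lambda>n. norm (measure M {\<omega> \<in> space M. \<bar>exp (bhat n \<omega>) - MF\<bar> > e})
              \<le> K2 * norm (real n powr (- \<alpha>))) at_top"
        unfolding eventually_at_top_linorder
      proof (intro exI allI impI)
        fix n assume nN: "n \<ge> N"
        have n1: "n \<ge> 1" using nN unfolding N_def by auto
        have rn: "real n \<ge> 1" using n1 by simp
        have nf: "Sxx n \<ge> c1 * real n powr (1 + \<gamma>)" "Sxx n > 0" "(xbar x n)\<^sup>2 \<le> K\<^sup>2 * real n powr \<mu>"
          using nfacts[OF nN] by auto
        have Zm[measurable]: "(\<lambda>\<omega>. \<Sum>j=1..n. bb n j * \<delta> j \<omega>) \<in> borel_measurable M"
          using \<delta>_rv by (intro borel_measurable_sum) auto
        have "measure M {\<omega> \<in> space M. \<bar>exp (bhat n \<omega>) - MF\<bar> > e}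
            \<le> measure M {\<omega> \<in> space M. e' < \<bar>\<Sum>j=1..n. bb n j * \<delta> j \<omega>\<bar>}"
        proof (rule P.finite_measure_mono)
          show "{\<omega> \<in> space M. \<bar>exp (bhat n \<omega>) - MF\<bar> > e} \<subseteq> {\<omega> \<in> space M. e' < \<bar>\<Sum>j=1..n. bb n j * \<delta> j \<omega>\<bar>}"
            using repr[OF nN] exp_dev[OF MF_pos e] unfolding e'_def by fastforce
        qed measurable
        also have "\<dots> \<le> C * (\<Sum>j=1..n. (bb n j)\<^sup>2) / e'\<^sup>2"
          by (rule tail_bound[OF M \<delta>_rv \<delta>_sq \<delta>_mean Qeq n1 C[OF n1] e'])
        also have "\<dots> = C / e'\<^sup>2 * (1 / real n + (xbar x n)\<^sup>2 / Sxx n)" using sqb[OF nN] by simp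
        also have "\<dots> \<le> C / e'\<^sup>2 * (real n powr (- \<alpha>) + K\<^sup>2 / c1 * real n powr (- \<alpha>))"
        proof (rule mult_left_mono)
          have t1: "1 / real n \<le> real n powr (- \<alpha>)"
          proof -
            have "1 / real n = real n powr (- 1)" using rn by (simp add: powr_minus divide_inverse)
            also have "\<dots> \<le> real n powr (- \<alpha>)" using rn alpha1 by (intro powr_mono) auto
            finally show ?thesis .
          qed
          have "(xbar x n)\<^sup>2 / Sxx n \<le> (K\<^sup>2 * real n powr \<mu>) / (c1 * real n powr (1 + \<gamma>))"
            using nf c1 rn by (intro frac_le) auto
          also have "\<dots> = K\<^sup>2 / c1 * real n powr (\<mu> - 1 - \<gamma>)"
          proof -
            have pw: "real n powr \<mu> = real n powr (1 + \<gamma>) * real n powr (\<mu> - 1 - \<gamma>)"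
              by (simp add: powr_add[symmetric])
            have "real n powr (1 + \<gamma>) > 0" using rn by simp
            thus ?thesis unfolding pw using c1 by (simp add: field_simps)
          qed
          also have "\<dots> \<le> K\<^sup>2 / c1 * real n powr (- \<alpha>)"
            using c1 rn alpha2 by (intro mult_left_mono powr_mono) auto
          finally show "1 / real n + (xbar x n)\<^sup>2 / Sxx n \<le> real n powr (- \<alpha>) + K\<^sup>2 / c1 * real n powr (- \<alpha>)"
            using t1 by linarith
        qed (use Cpos in simp)
        also have "\<dots> = K2 * real n powr (- \<alpha>)" unfolding K2_def by (simp add: algebra_simps)
        finally show "norm (measure M {\<omega> \<in> space M. \<bar>exp (bhat n \<omega>) - MF\<bar> > e})
              \<le> K2 * norm (real n powr (- \<alpha>))" by simp
      qed
    qed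
  qed
qed

end
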